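(* Let $Q=ABCD$ be a non-degenerate parallelogram of perimeter $2$ and $Q^\circ=KLMN$ its dual. Then $|KL|=|BC|$, $|LM|=|AB|$, $|KM|=|AC|$, and $Q^\circ$ is a parallelogram congruent to $Q$ (parallelograms are self-dual up to isometry).
   Context: Identify $\mathbb{R}^2$ with $\mathbb{C}$. A quadrangle $Q=ABCD$ is an ordered 4-tuple of points $A,B,C,D\in\mathbb{C}$: $A$ is the first vertex and the order $A\to B\to C\to D\to A$ is the direction of traversal. Its edge vectors are $z_1=B-A$, $z_2=C-B$, $z_3=D-C$, $z_4=A-D$, so $z_1+z_2+z_3+z_4=0$; its perimeter is $|z_1|+|z_2|+|z_3|+|z_4|$. $Q$ is non-degenerate if each pair of consecutive edge vectors $(z_1,z_2),(z_2,z_3),(z_3,z_4),(z_4,z_1)$ consists of nonzero, non-collinear vectors. Associated plane: for a non-degenerate $Q$ of perimeter $2$, choose $u_1,\dots,u_4\in\mathbb{C}$ with $u_k^2=z_k$, where $u_1$ is an arbitrary square root of $z_1$ and for $k=1,2,3$ the sign of $u_{k+1}$ is chosen so that $\operatorname{Im}(\overline{u_k}u_{k+1})$ has the same sign as $\operatorname{Im}(\overline{z_k}z_{k+1})$. Write $u_k=a_k+i b_k$ and $\bar a=(a_1,a_2,a_3,a_4)$, $\bar b=(b_1,b_2,b_3,b_4)$; these are orthonormal in $\mathbb{R}^4$. Let $\Pi=\operatorname{span}(\bar a,\bar b)$ and $\Pi^\perp$ its orthogonal complement. Dual quadrangle: choose an orthonormal basis $(\bar c,\bar d)$ of $\Pi^\perp$,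 put $w_k=(c_k+i d_k)^2$; then $\sum_k w_k=0$ and $\sum_k|w_k|=2$. The dual quadrangle $Q^\circ=KLMN$ is the quadrangle with $L-K=w_1$, $M-L=w_2$, $N-M=w_3$, $K-N=w_4$. It is determined up to rotation, reflection and translation. *)

theory Defs
  imports "HOL-Analysis.Analysis"
begin

definition edge :: "complex \<Rightarrow> complex \<Rightarrow> complex \<Rightarrow> complex \<Rightarrow> nat \<Rightarrow> complex" where
  "edge A B C D k = (if k = 1 then B - A else if k = 2 then C - B
                     else if k = 3 then D - C else A - D)"

definition perimeter :: "complex \<Rightarrow> complex \<Rightarrow> complex \<Rightarrow> complex \<Rightarrow> real" where
  "perimeter A B C D = cmod (B - A) + cmod (C - B) + cmod (D - C) + cmod (A - D)"

definition collinear_vec :: "complex \<Rightarrow> complex \<Rightarrow> bool" where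
  "collinear_vec z w \<longleftrightarrow> (\<exists>t::real. z = of_real t * w \<or> w = of_real t * z)"

definition nondegenerate_quad :: "complex \<Rightarrow> complex \<Rightarrow> complex \<Rightarrow> complex \<Rightarrow> bool" where
  "nondegenerate_quad A B C D \<longleftrightarrow>
     (\<forall>k\<in>{1..4::nat}. let z = edge A B C D k; w = edge A B C D (if k = 4 then 1 else k + 1)
        in z \<noteq> 0 \<and> w \<noteq> 0 \<and> \<not> collinear_vec z w)"

definition parallelogram :: "complex \<Rightarrow> complex \<Rightarrow> complex \<Rightarrow> complex \<Rightarrow> bool" where
  "parallelogram A B C D \<longleftrightarrow> B - A = C - D"

text \<open>The square roots u_1..u_4 used to define the associated plane: u_k^2 = z_k,
  u_1 arbitrary, and sign of Im(conj u_k u_(k+1)) equals sign of Im(conj z_k z_(k+1)).\<close>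
definition associated_roots :: "complex \<Rightarrow> complex \<Rightarrow> complex \<Rightarrow> complex \<Rightarrow> (nat \<Rightarrow> complex) \<Rightarrow> bool" where
  "associated_roots A B C D u \<longleftrightarrow>
     (\<forall>k\<in>{1..4::nat}. (u k)\<^sup>2 = edge A B C D k) \<and>
     (\<forall>k\<in>{1..3::nat}. sgn (Im (cnj (u k) * u (k + 1)))
                       = sgn (Im (cnj (edge A B C D k) * edge A B C D (k + 1))))"

definition inner4 :: "(nat \<Rightarrow> real) \<Rightarrow> (nat \<Rightarrow> real) \<Rightarrow> real" where
  "inner4 x y = (\<Sum>k=1..4. x k * y k)"

text \<open>(c, d) is an orthonormal basis of the orthogonal complement of
  Pi = span(a, b), where a_k = Re u_k, b_k = Im u_k. (Pi^perp is 2-dimensional,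
  so any orthonormal pair in it is a basis.)\<close>
definition dual_basis :: "(nat \<Rightarrow> complex) \<Rightarrow> (nat \<Rightarrow> real) \<Rightarrow> (nat \<Rightarrow> real) \<Rightarrow> bool" where
  "dual_basis u c d \<longleftrightarrow>
     (let a = (\<lambda>k. Re (u k)); b = (\<lambda>k. Im (u k)) in
       inner4 c a = 0 \<and> inner4 c b = 0 \<and> inner4 d a = 0 \<and> inner4 d b = 0 \<and>
       inner4 c c = 1 \<and> inner4 d d = 1 \<and> inner4 c d = 0)"

definition dual_quad :: "(nat \<Rightarrow> real) \<Rightarrow> (nat \<Rightarrow> real) \<Rightarrow> complex \<Rightarrow> complex \<Rightarrow> complex \<Rightarrow> complex \<Rightarrow> bool" where
  "dual_quad c d K L M N \<longleftrightarrow>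
     (let w = (\<lambda>k. (Complex (c k) (d k))\<^sup>2) in
       L - K = w 1 \<and> M - L = w 2 \<and> N - M = w 3 \<and> K - N = w 4)"

definition plane_isometry :: "(complex \<Rightarrow> complex) \<Rightarrow> bool" where
  "plane_isometry f \<longleftrightarrow> (\<forall>x y. dist (f x) (f y) = dist x y)"

end

theory Submission
  imports Defs
begin

definition idx4 :: "4 \<Rightarrow> nat" where
  "idx4 i = (if i = 1 then 1 else if i = 2 then 2 else if i = 3 then 3 else 4)"

lemma rows_orth:
  fixes col :: "nat \<Rightarrow> nat \<Rightarrow> real"
  assumes H: "\<And>j l. j \<in> {1..4} \<Longrightarrow> l \<in> {1..4} \<Longrightarrow> (\<Sum>k=1..4. col j k * col l k) = (if j = l then 1 else 0)"
  and k: "k \<in> {1..4}" and m: "m \<in> {1..4}"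
  shows "(\<Sum>j=1..4. col j k * col j m) = (if k = m then 1 else 0)"
proof -
  define Q :: "real^4^4" where "Q = (\<chi> i j. col (idx4 j) (idx4 i))"
  have s4: "(\<Sum>k=1..4. f k) = f 1 + f 2 + f 3 + (f 4::real)" for f :: "nat \<Rightarrow> real"
    by (simp add: numeral_eq_Suc)
  have idx: "idx4 1 = 1" "idx4 2 = 2" "idx4 3 = 3" "idx4 4 = 4" by (simp_all add: idx4_def)
  have rng: "idx4 i \<in> {1..4}" for i by (simp add: idx4_def)
  have inj: "idx4 i = idx4 j \<longleftrightarrow> i = j" for i j
    using exhaust_4[of i] exhaust_4[of j] by (auto simp: idx4_def)
  have "transpose Q ** Q = mat 1"
  proof -
    have "(transpose Q ** Q) $ j $ l = mat 1 $ j $ l" for j l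
    proof -
      have "(transpose Q ** Q) $ j $ l = (\<Sum>i\<in>UNIV. col (idx4 j) (idx4 i) * col (idx4 l) (idx4 i))"
        by (simp add: matrix_matrix_mult_def transpose_def Q_def)
      also have "\<dots> = (\<Sum>k=1..4. col (idx4 j) k * col (idx4 l) k)"
        by (subst s4) (simp add: sum_4 idx)
      also have "\<dots> = (if j = l then 1 else 0)" using H[OF rng rng] inj by simp
      finally show ?thesis by (simp add: mat_def)
    qed
    then show ?thesis by (simp add: vec_eq_iff)
  qed
  then have QQ: "Q ** transpose Q = mat 1" using matrix_left_right_inverse by blast
  have surj: "\<exists>i. idx4 i = n" if "n \<in> {1..4}" for n
  proof -
    have "n = 1 \<or> n = 2 \<or> n = 3 \<or> n = 4" using that by auto
    then show ?thesis using idx by metis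
  qed
  obtain i where i: "idx4 i = k" using surj[OF k] by blast
  obtain i' where i': "idx4 i' = m" using surj[OF m] by blast
  have "(Q ** transpose Q) $ i $ i' = (\<Sum>j\<in>UNIV. col (idx4 j) k * col (idx4 j) m)"
    by (simp add: matrix_matrix_mult_def transpose_def Q_def i i')
  also have "\<dots> = (\<Sum>j=1..4. col j k * col j m)" by (subst s4) (simp add: sum_4 idx)
  finally have "(\<Sum>j=1..4. col j k * col j m) = (if i = i' then 1 else 0)" using QQ by (simp add: mat_def)
  moreover have "(i = i') = (k = m)" using i i' inj by metis
  ultimately show ?thesis by simp
qed
lemma sq_neg:
  fixes x y :: complex
  assumes "Re (cnj x * y) = 0" "cmod x = cmod y"
  shows "y\<^sup>2 = - (x\<^sup>2)"
proof -
  obtain a b where x: "x = Complex a b" by (cases x)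
  obtain c d where y: "y = Complex c d" by (cases y)
  have h1: "a*c + b*d = 0" using assms(1) by (simp add: x y)
  have "(cmod x)^2 = (cmod y)^2" using assms(2) by simp
  then have h2: "a^2+b^2 = c^2+d^2" by (simp add: x y cmod_power2)
  have id: "(c^2-d^2+a^2-b^2)^2 + (2*c*d+2*a*b)^2 = (a^2+b^2-c^2-d^2)^2 + 4*(a*c+b*d)^2"
    by algebra
  have "(c^2-d^2+a^2-b^2)^2 + (2*c*d+2*a*b)^2 = 0" using id h1 h2 by simp
  then have "c^2-d^2+a^2-b^2 = 0" "2*c*d+2*a*b = 0"
    using sum_power2_eq_zero_iff[of "c^2-d^2+a^2-b^2" "2*c*d+2*a*b"] by auto  
  then show ?thesis by (simp add: x y complex_eq_iff power2_eq_square algebra_simps)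
qed

lemma iso_exists:
  fixes w1 w2 v1 v2 :: complex
  assumes "w1 \<noteq> 0" "cmod w1 = cmod v1" "cmod w2 = cmod v2" "Re (cnj w1 * w2) = Re (cnj v1 * v2)"
  shows "\<exists>\<alpha>. cmod \<alpha> = 1 \<and> ((\<alpha> * w1 = v1 \<and> \<alpha> * w2 = v2) \<or> (\<alpha> * cnj w1 = v1 \<and> \<alpha> * cnj w2 = v2))"
proof -
  define P where "P = cnj w1 * w2"
  define R where "R = cnj v1 * v2"
  have v1: "v1 \<noteq> 0" using assms by auto
  have "cmod P = cmod R" using assms by (simp add: P_def R_def norm_mult)
  then have "(cmod P)^2 = (cmod R)^2" by simp
  then have "(Im P)^2 = (Im R)^2" using assms(4) by (simp add: cmod_power2 P_def R_def)
  then have "Im P = Im R \<or> Im P = - Im R" by (simp add: power2_eq_iff)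
  then have PR: "P = R \<or> P = cnj R" using assms(4) by (auto simp: complex_eq_iff P_def R_def)
  have nw: "cnj w1 * w1 = of_real ((cmod w1)^2)" by (metis complex_norm_square mult.commute of_real_power)
  have nv: "cnj v1 * v1 = of_real ((cmod v1)^2)" by (metis complex_norm_square mult.commute of_real_power)
  have nz: "(cmod w1)^2 \<noteq> 0" using assms(1) by simp
  show ?thesis
  proof (cases "P = R")
    case True
    define \<alpha> where "\<alpha> = v1 / w1"
    have "\<alpha> * w1 = v1" using assms(1) by (simp add: \<alpha>_def)
    moreover have "\<alpha> * w2 = v2"
    proof -
      have "\<alpha> * w2 * (cnj w1 * w1) = v1 * P" using assms(1) by (simp add: \<alpha>_def P_def field_simps)
      also have "\<dots> = v2 * (cnj v1 * v1)" using True by (simp add: R_def)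
      finally have "\<alpha> * w2 * of_real ((cmod w1)^2) = v2 * of_real ((cmod w1)^2)" using nw nv assms(2) by simp
      then show ?thesis using nz by (simp del: of_real_power)
    qed
    moreover have "cmod \<alpha> = 1" using assms(1,2) v1 by (simp add: \<alpha>_def norm_divide)
    ultimately show ?thesis by blast
  next
    case False
    then have PR: "cnj P = R" using PR by auto
    define \<alpha> where "\<alpha> = v1 / cnj w1"
    have cw: "cnj w1 \<noteq> 0" using assms(1) by simp
    have "\<alpha> * cnj w1 = v1" using cw by (simp add: \<alpha>_def)
    moreover have "\<alpha> * cnj w2 = v2"
    proof -
      have "\<alpha> * cnj w2 * (cnj w1 * w1) = v1 * cnj P" using cw by (simp add: \<alpha>_def P_def field_simps)
      also have "\<dots> = v2 * (cnj v1 * v1)" using PR by (simp add: R_def)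
      finally have "\<alpha> * cnj w2 * of_real ((cmod w1)^2) = v2 * of_real ((cmod w1)^2)" using nw nv assms(2) by simp
      then show ?thesis using nz by (simp del: of_real_power)
    qed
    moreover have "cmod \<alpha> = 1" using assms(1,2) v1 by (simp add: \<alpha>_def norm_divide)
    ultimately show ?thesis by blast
  qed
qed


lemma re0:
  fixes x y :: complex
  assumes "y\<^sup>2 = - (x\<^sup>2)"
  shows "Re (cnj x * y) = 0"
proof -
  have "(y - \<i> * x) * (y + \<i> * x) = 0" using assms by (simp add: algebra_simps power2_eq_square)
  then have "y - \<i> * x = 0 \<or> y + \<i> * x = 0" by simp
  then have "y = \<i> * x \<or> y = - \<i> * x" by (auto simp: algebra_simps eq_neg_iff_add_eq_0)
  then show ?thesis by (auto simp: complex_eq_iff)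
qed

lemma re_sq: "Re (p\<^sup>2) = 2 * (Re p)\<^sup>2 - (cmod p)\<^sup>2"
  using cmod_power2[of p] by (simp add: power2_eq_square)

lemma i4: "inner4 x y = x 1 * y 1 + x 2 * y 2 + x 3 * y 3 + x 4 * y 4"
  unfolding inner4_def by (simp add: numeral_eq_Suc)

theorem theorem8p2:
  fixes A B C D K L M N :: complex and u :: "nat \<Rightarrow> complex" and c d :: "nat \<Rightarrow> real"
  assumes "nondegenerate_quad A B C D"
    and "parallelogram A B C D"
    and "perimeter A B C D = 2"
    and "associated_roots A B C D u"
    and "dual_basis u c d"
    and "dual_quad c d K L M N"
  shows "cmod (L - K) = cmod (C - B) \<and> cmod (M - L) = cmod (B - A) \<and> cmod (M - K) = cmod (C - A)
         \<and> parallelogram K L M N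
         \<and> (\<exists>f. plane_isometry f \<and> f K = C \<and> f L = B \<and> f M = A \<and> f N = D)"
proof -
  define z1 where "z1 = B - A"
  define z2 where "z2 = C - B"
  have Dd: "D = C - z1" using assms(2) by (simp add: parallelogram_def z1_def)
  have e3: "D - C = - z1" using Dd by simp
  have e4: "A - D = - z2" using Dd by (simp add: z1_def z2_def)
  have u1: "(u 1)\<^sup>2 = z1" and u2: "(u 2)\<^sup>2 = z2" and u3: "(u 3)\<^sup>2 = - z1" and u4: "(u 4)\<^sup>2 = - z2"
    using assms(4) unfolding associated_roots_def edge_def
    by (auto simp: z1_def z2_def e3 e4 simp del: minus_diff_eq)
  have per: "cmod z1 + cmod z2 = 1"
    using assms(3) unfolding perimeter_def by (simp add: z1_def[symmetric] z2_def[symmetric] e3 e4)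
  have z2nz: "z2 \<noteq> 0"
    using assms(1) unfolding nondegenerate_quad_def Let_def edge_def
    by (drule_tac x=1 in bspec) (auto simp: z2_def)
  define a where "a = (\<lambda>k. Re (u k))"
  define b where "b = (\<lambda>k. Im (u k))"
  have nu: "a k ^ 2 + b k ^ 2 = cmod ((u k)\<^sup>2)" for k
    by (simp add: a_def b_def cmod_power2 norm_power)
  have rsq: "Re ((u k)\<^sup>2) = a k ^ 2 - b k ^ 2" "Im ((u k)\<^sup>2) = 2 * a k * b k" for k
    by (simp_all add: a_def b_def power2_eq_square)
  have sum0: "(u 1)\<^sup>2 + (u 2)\<^sup>2 + (u 3)\<^sup>2 + (u 4)\<^sup>2 = 0" using u1 u2 u3 u4 by simp
  have sre: "(a 1^2 - b 1^2) + (a 2^2 - b 2^2) + (a 3^2 - b 3^2) + (a 4^2 - b 4^2) = 0"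
    using arg_cong[OF sum0, of Re] by (simp only: plus_complex.sel rsq zero_complex.sel)
  have sim: "2*a 1*b 1 + 2*a 2*b 2 + 2*a 3*b 3 + 2*a 4*b 4 = 0"
    using arg_cong[OF sum0, of Im] by (simp only: plus_complex.sel rsq zero_complex.sel)
  have snorm: "(a 1^2 + b 1^2) + (a 2^2 + b 2^2) + (a 3^2 + b 3^2) + (a 4^2 + b 4^2) = 2"
    unfolding nu u1 u2 u3 u4 norm_minus_cancel using per by simp
  have aa: "inner4 a a = 1" and bb: "inner4 b b = 1" and ab: "inner4 a b = 0"
    using sre sim snorm by (simp_all add: i4 power2_eq_square)
  have cd: "inner4 c a = 0" "inner4 c b = 0" "inner4 d a = 0" "inner4 d b = 0"
       "inner4 c c = 1" "inner4 d d = 1" "inner4 c d = 0"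
    using assms(5) unfolding dual_basis_def Let_def a_def b_def by auto
  have isym: "inner4 x y = inner4 y x" for x y by (simp add: i4 mult.commute)
  define col where "col = (\<lambda>j::nat. if j = 1 then a else if j = 2 then b else if j = 3 then c else d)"
  have H: "(\<Sum>k=1..4. col j k * col l k) = (if j = l then 1 else 0)" if "j \<in> {1..4}" "l \<in> {1..4}" for j l
  proof -
    have j: "j = 1 \<or> j = 2 \<or> j = 3 \<or> j = 4" and l: "l = 1 \<or> l = 2 \<or> l = 3 \<or> l = 4" using that by auto
    have "(\<Sum>k=1..4. col j k * col l k) = inner4 (col j) (col l)" by (simp add: inner4_def)
    also have "\<dots> = (if j = l then 1 else 0)"
      using j l aa bb ab cd isym[of a b] isym[of c a] isym[of c b] isym[of d a] isym[of d b] isym[of c d]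
      by (auto simp: col_def)
    finally show ?thesis .
  qed
  have R: "a k * a m + b k * b m + c k * c m + d k * d m = (if k = m then 1 else 0)"
    if "k \<in> {1..4}" "m \<in> {1..4}" for k m
  proof -
    have "(\<Sum>j=1..4. col j k * col j m) = (if k = m then 1 else 0)" by (rule rows_orth[OF H that])
    moreover have "(\<Sum>j=1..4. col j k * col j m) = a k * a m + b k * b m + c k * c m + d k * d m"
      by (simp add: numeral_eq_Suc col_def)
    ultimately show ?thesis by simp
  qed
  define \<zeta> where "\<zeta> = (\<lambda>k. Complex (c k) (d k))"
  have w: "L - K = (\<zeta> 1)\<^sup>2" "M - L = (\<zeta> 2)\<^sup>2" "N - M = (\<zeta> 3)\<^sup>2" "K - N = (\<zeta> 4)\<^sup>2"
    using assms(6) unfolding dual_quad_def Let_def \<zeta>_def by auto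
  have nz: "(cmod (\<zeta> k))\<^sup>2 = c k ^ 2 + d k ^ 2" for k by (simp add: \<zeta>_def cmod_power2)
  have reu: "Re (cnj (u k) * u m) = a k * a m + b k * b m" for k m by (simp add: a_def b_def)
  have rez: "Re (cnj (\<zeta> k) * \<zeta> m) = c k * c m + d k * d m" for k m by (simp add: \<zeta>_def)
  have n1: "(cmod (\<zeta> 1))\<^sup>2 = cmod z2" using R[of 1 1] nz[of 1] nu[of 1] u1 per by (simp add: power2_eq_square)
  have n2: "(cmod (\<zeta> 2))\<^sup>2 = cmod z1" using R[of 2 2] nz[of 2] nu[of 2] u2 per by (simp add: power2_eq_square)
  have n3: "(cmod (\<zeta> 3))\<^sup>2 = cmod z2" using R[of 3 3] nz[of 3] nu[of 3] u3 per by (simp add: power2_eq_square)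
  have g1: "cmod (L - K) = cmod (C - B)" using n1 w by (simp add: norm_power z2_def)
  have g2: "cmod (M - L) = cmod (B - A)" using n2 w by (simp add: norm_power z1_def)
  have "(u 3)\<^sup>2 = - ((u 1)\<^sup>2)" using u1 u3 by simp
  then have "Re (cnj (u 1) * u 3) = 0" by (rule re0)
  then have "Re (cnj (\<zeta> 1) * \<zeta> 3) = 0" using R[of 1 3] reu[of 1 3] rez[of 1 3] by simp
  moreover have "cmod (\<zeta> 1) = cmod (\<zeta> 3)" using n1 n3 by (metis norm_ge_zero power2_eq_iff_nonneg)
  ultimately have z3: "(\<zeta> 3)\<^sup>2 = - ((\<zeta> 1)\<^sup>2)" by (rule sq_neg)
  have par: "parallelogram K L M N" unfolding parallelogram_def using w z3
    by (metis minus_diff_eq)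
  define p where "p = cnj (\<zeta> 1) * \<zeta> 2"
  define q where "q = cnj (u 1) * u 2"
  have rpq: "Re p = - Re q" using R[of 1 2] reu[of 1 2] rez[of 1 2] by (simp add: p_def q_def)
  have "(cmod p)\<^sup>2 = cmod z2 * cmod z1" using n1 n2 by (simp add: p_def norm_mult power_mult_distrib)
  moreover have "(cmod q)\<^sup>2 = cmod z1 * cmod z2"
    using u1 u2 by (simp add: q_def norm_mult power_mult_distrib norm_power[symmetric])
  ultimately have cpq: "(cmod p)\<^sup>2 = (cmod q)\<^sup>2" by simp
  have "Re (cnj ((\<zeta> 1)\<^sup>2) * (\<zeta> 2)\<^sup>2) = Re (p\<^sup>2)" by (simp add: p_def power_mult_distrib)
  also have "\<dots> = Re (q\<^sup>2)" using rpq cpq by (simp add: re_sq)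
  also have "\<dots> = Re (cnj (q\<^sup>2))" by (simp add: power2_eq_square)
  also have "\<dots> = Re (cnj (- z2) * (- z1))" using u1 u2 by (simp add: q_def power_mult_distrib mult.commute)
  finally have reeq: "Re (cnj ((\<zeta> 1)\<^sup>2) * (\<zeta> 2)\<^sup>2) = Re (cnj (- z2) * (- z1))" .
  have w1nz: "(\<zeta> 1)\<^sup>2 \<noteq> 0" using n1 z2nz by (auto simp: power2_eq_square)
  have m1: "cmod ((\<zeta> 1)\<^sup>2) = cmod (- z2)" using n1 by (simp add: norm_power)
  have m2: "cmod ((\<zeta> 2)\<^sup>2) = cmod (- z1)" using n2 by (simp add: norm_power)
  obtain \<alpha> where al: "cmod \<alpha> = 1"
    and cs: "(\<alpha> * (\<zeta> 1)\<^sup>2 = - z2 \<and> \<alpha> * (\<zeta> 2)\<^sup>2 = - z1) \<or>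
             (\<alpha> * cnj ((\<zeta> 1)\<^sup>2) = - z2 \<and> \<alpha> * cnj ((\<zeta> 2)\<^sup>2) = - z1)"
    using iso_exists[OF w1nz m1 m2 reeq] by blast
  have LK: "L = K + (\<zeta> 1)\<^sup>2" and MK: "M = K + (\<zeta> 1)\<^sup>2 + (\<zeta> 2)\<^sup>2" and NK: "N = K + (\<zeta> 2)\<^sup>2"
    using w z3 by (auto simp: algebra_simps)
  have Bv: "B = C - z2" and Av: "A = C - z2 - z1" by (simp_all add: z1_def z2_def)
  have iso: "\<exists>f. plane_isometry f \<and> f K = C \<and> f L = B \<and> f M = A \<and> f N = D"
    using cs
  proof
    assume h: "\<alpha> * (\<zeta> 1)\<^sup>2 = - z2 \<and> \<alpha> * (\<zeta> 2)\<^sup>2 = - z1"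
    define f where "f = (\<lambda>x. C + \<alpha> * (x - K))"
    have "plane_isometry f" unfolding plane_isometry_def f_def dist_norm
      by (simp add: al norm_mult right_diff_distrib[symmetric])
    then show ?thesis using h
      by (intro exI[of _ f]) (simp add: f_def LK MK NK Bv Av Dd algebra_simps)
  next
    assume h: "\<alpha> * cnj ((\<zeta> 1)\<^sup>2) = - z2 \<and> \<alpha> * cnj ((\<zeta> 2)\<^sup>2) = - z1"
    define f where "f = (\<lambda>x. C + \<alpha> * cnj (x - K))"
    have "plane_isometry f" unfolding plane_isometry_def f_def dist_norm
      by (simp add: al norm_mult right_diff_distrib[symmetric] complex_cnj_diff[symmetric] del: complex_cnj_diff)
    then show ?thesis using h
      by (intro exI[of _ f]) (simp add: f_def LK MK NK Bv Av Dd algebra_simps)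
  qed
  then obtain f where f: "plane_isometry f" "f K = C" "f M = A" by blast
  have "cmod (M - K) = dist (f M) (f K)" using f(1) unfolding plane_isometry_def by (simp add: dist_norm)
  also have "\<dots> = cmod (C - A)" using f by (simp add: dist_norm norm_minus_commute)
  finally have g3: "cmod (M - K) = cmod (C - A)" .
  show ?thesis using g1 g2 g3 par iso by blast
qed

end
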